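(* Let $B>4$ and $U\ge1$ be integers, let $N_0\ge 0$ and $E_s>0$, and let $\mathbf{H}\in\mathbb{C}^{B\times U}$ have i.i.d.\ circularly symmetric complex Gaussian entries with zero mean and unit variance. Let $\mathbf{A}=\mathbf{H}^H\mathbf{H}+N_0E_s^{-1}\mathbf{I}_U$, let $\mathbf{D}$ be the diagonal matrix with the same diagonal as $\mathbf{A}$, and let $\mathbf{E}=\mathbf{A}-\mathbf{D}$. Then \[ \mathbb{E}\left[\|\mathbf{D}^{-1}\mathbf{E}\|_F^2\right]\le (U^2-U)\sqrt{\frac{2B(B+1)}{(B-1)(B-2)(B-3)(B-4)}}. \]
   Context: $\|\cdot\|_F$ denotes the Frobenius norm and $\mathbf{H}^H$ the conjugate transpose. *)

theory Defs
  imports "HOL-Probability.Probability"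
begin

text \<open>Matrices are represented as functions nat => nat => complex, with the
  dimensions carried explicitly (entries outside the index range are irrelevant).\<close>

text \<open>Sample space for the channel matrix: one real coordinate for the real part
  (flag False) and one for the imaginary part (flag True) of each entry (b,u),
  b < B, u < U.  All coordinates are i.i.d. N(0,1/2), so each entry
  H b u = Re + i Im is circularly symmetric complex Gaussian, mean 0, variance 1,
  and the entries are i.i.d.\<close>
definition gauss_space :: "nat \<Rightarrow> nat \<Rightarrow> (nat \<times> nat \<times> bool \<Rightarrow> real) measure" where
  "gauss_space B U =
     PiM ({..<B} \<times> {..<U} \<times> UNIV) (\<lambda>_. density lborel (normal_density 0 (sqrt (1/2))))"

definition chan :: "(nat \<times> nat \<times> bool \<Rightarrow> real) \<Rightarrow> nat \<Rightarrow> nat \<Rightarrow> complex" where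
  "chan \<omega> b u = Complex (\<omega> (b, u, False)) (\<omega> (b, u, True))"

definition Amat :: "nat \<Rightarrow> real \<Rightarrow> real \<Rightarrow> (nat \<Rightarrow> nat \<Rightarrow> complex) \<Rightarrow> nat \<Rightarrow> nat \<Rightarrow> complex" where
  "Amat B N0 Es H i j = (\<Sum>b<B. cnj (H b i) * H b j) + (if i = j then complex_of_real (N0 / Es) else 0)"

definition diag_part :: "(nat \<Rightarrow> nat \<Rightarrow> complex) \<Rightarrow> nat \<Rightarrow> nat \<Rightarrow> complex" where
  "diag_part M i j = (if i = j then M i i else 0)"

definition offdiag_part :: "(nat \<Rightarrow> nat \<Rightarrow> complex) \<Rightarrow> nat \<Rightarrow> nat \<Rightarrow> complex" where
  "offdiag_part M i j = M i j - diag_part M i j"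

definition diag_inv :: "(nat \<Rightarrow> nat \<Rightarrow> complex) \<Rightarrow> nat \<Rightarrow> nat \<Rightarrow> complex" where
  "diag_inv D i j = (if i = j then inverse (D i i) else 0)"

definition mat_mul :: "nat \<Rightarrow> (nat \<Rightarrow> nat \<Rightarrow> complex) \<Rightarrow> (nat \<Rightarrow> nat \<Rightarrow> complex) \<Rightarrow> nat \<Rightarrow> nat \<Rightarrow> complex" where
  "mat_mul n M N i j = (\<Sum>k<n. M i k * N k j)"

definition frob_sq :: "nat \<Rightarrow> nat \<Rightarrow> (nat \<Rightarrow> nat \<Rightarrow> complex) \<Rightarrow> real" where
  "frob_sq m n M = (\<Sum>i<m. \<Sum>j<n. (cmod (M i j))\<^sup>2)"

end

theory Submission
  imports Defs
begin


definition Nd :: "real measure" where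
  "Nd = density lborel (normal_density 0 (sqrt (1/2)))"

lemma prob_Nd: "prob_space Nd"
  unfolding Nd_def using prob_space_normal_density[of "sqrt (1/2)" 0] by simp

lemma sets_Nd[simp, measurable_cong]: "sets Nd = sets borel"
  unfolding Nd_def by simp

lemma space_Nd[simp]: "space Nd = UNIV"
  unfolding Nd_def by simp

lemma normal_sq:
  "(\<integral>\<^sup>+z. ennreal ((c + w*z)^2) \<partial>Nd) = ennreal (c^2 + w^2/2)"
proof -
  let ?nd = "normal_density 0 (sqrt (1/2))"
  have s: "(0::real) < sqrt (1/2)" by simp
  have h0: "has_bochner_integral lborel (\<lambda>x. ?nd x * x ^ (2*0)) 1"
    using normal_moment_even[OF s, of 0 0] by simp
  have h1: "has_bochner_integral lborel (\<lambda>x. ?nd x * x ^ (2*1)) (1/2)"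
    using normal_moment_even[OF s, of 0 1] by simp
  have h2: "has_bochner_integral lborel (\<lambda>x. ?nd x * x ^ (2*0+1)) 0"
    using normal_moment_odd[OF s, of 0 0] by simp
  have "has_bochner_integral lborel (\<lambda>x. c^2 * (?nd x * x ^ (2*0)) + (2*c*w) * (?nd x * x ^ (2*0+1)) + w^2 * (?nd x * x ^ (2*1))) (c^2 * 1 + (2*c*w)*0 + w^2*(1/2))"
    by (intro has_bochner_integral_add has_bochner_integral_mult_right h0 h1 h2)
  then have hb: "has_bochner_integral lborel (\<lambda>x. ?nd x * (c + w*x)^2) (c^2 + w^2/2)"
    by (rule has_bochner_integral_cong[THEN iffD1, rotated -1]) (auto simp: power2_eq_square algebra_simps)
  have "(\<integral>\<^sup>+z. ennreal ((c + w*z)^2) \<partial>Nd) = (\<integral>\<^sup>+z. ennreal (?nd z) * ennreal ((c + w*z)^2) \<partial>lborel)"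
    unfolding Nd_def by (subst nn_integral_density) auto
  also have "\<dots> = (\<integral>\<^sup>+z. ennreal (?nd z * (c + w*z)^2) \<partial>lborel)"
    by (simp add: ennreal_mult)
  also have "\<dots> = ennreal (c^2 + w^2/2)"
    using nn_integral_eq_integral[OF integrable.intros[OF hb]] has_bochner_integral_integral_eq[OF hb]
    by simp
  finally show ?thesis .
qed

lemma laplace_Nd:
  assumes t: "t \<ge> 0"
  shows "(\<integral>\<^sup>+z. ennreal (exp (-t*z^2)) \<partial>Nd) = ennreal (1 / sqrt (1+t))"
proof -
  let ?nd = "normal_density 0 (sqrt (1/2))"
  let ?s = "sqrt (1/(2*(1+t)))"
  have eq: "?nd z * exp (-t*z^2) = (1/sqrt(1+t)) * normal_density 0 ?s z" for z
  proof -
    have "?nd z * exp (-t*z^2) = 1/sqrt pi * exp(-(1+t)*z^2)"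
      unfolding normal_density_def by (simp add: exp_add[symmetric] algebra_simps)
    moreover have "normal_density 0 ?s z = sqrt (1+t) / sqrt pi * exp(-(1+t)*z^2)"
    proof -
      have "sqrt (2 + t*2) = sqrt 2 * sqrt (1+t)"
        by (metis mult.commute real_sqrt_mult distrib_right mult_1 one_add_one)
      moreover have "(- (2 * z\<^sup>2) - t * (2 * z\<^sup>2)) / 2 = - z\<^sup>2 - t * z\<^sup>2" by simp
      ultimately show ?thesis
        unfolding normal_density_def using t
        by (simp add: real_sqrt_divide real_sqrt_mult field_simps)
    qed
    ultimately have "sqrt pi * ((1/sqrt(1+t)) * normal_density 0 ?s z) = sqrt pi * (?nd z * exp (-t*z^2))"
      using t by (simp add: field_simps)
    then show ?thesis by (subst (asm) mult_left_cancel) auto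
  qed
  have "(\<integral>\<^sup>+z. ennreal (exp (-t*z^2)) \<partial>Nd) = (\<integral>\<^sup>+z. ennreal (?nd z) * ennreal (exp (-t*z^2)) \<partial>lborel)"
    unfolding Nd_def by (subst nn_integral_density) auto
  also have "\<dots> = (\<integral>\<^sup>+z. ennreal (1/sqrt(1+t)) * ennreal (normal_density 0 ?s z) \<partial>lborel)"
  proof (intro nn_integral_cong)
    fix z
    have "ennreal(?nd z) * ennreal(exp(-t*z^2)) = ennreal(?nd z * exp(-t*z^2))"
      by (rule ennreal_mult[symmetric]) auto
    also have "\<dots> = ennreal((1/sqrt(1+t)) * normal_density 0 ?s z)" by (simp only: eq)
    also have "\<dots> = ennreal (1/sqrt(1+t)) * ennreal (normal_density 0 ?s z)"
      by (rule ennreal_mult) (use t in auto)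
    finally show "ennreal(?nd z) * ennreal(exp(-t*z^2)) = ennreal (1/sqrt(1+t)) * ennreal (normal_density 0 ?s z)" .
  qed
  also have "\<dots> = ennreal (1/sqrt(1+t)) * (\<integral>\<^sup>+z. ennreal (normal_density 0 ?s z) \<partial>lborel)"
    by (subst nn_integral_cmult) auto
  also have "(\<integral>\<^sup>+z. ennreal (normal_density 0 ?s z) \<partial>lborel) = 1"
  proof -
    have sp: "0 < ?s" using t by simp
    show ?thesis
      using integrable_normal_density[OF sp] integral_normal_density[OF sp]
      by (subst nn_integral_eq_integral) auto
  qed
  finally show ?thesis by simp
qed

lemma psf: "product_sigma_finite (\<lambda>_. Nd)"
  unfolding product_sigma_finite_def using prob_space_imp_sigma_finite[OF prob_Nd] by simp

lemma prob_PiM_Nd: "prob_space (PiM K (\<lambda>_. Nd))"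
  by (rule prob_space_PiM) (rule prob_Nd)

lemma emeasure_PiM_Nd[simp]: "emeasure (PiM K (\<lambda>_. Nd)) (space (PiM K (\<lambda>_. Nd))) = 1"
  using prob_PiM_Nd prob_space.emeasure_space_1 by blast

lemma sum_sq:
  fixes w :: "'i \<Rightarrow> real"
  assumes "finite K"
  shows "(\<integral>\<^sup>+x. ennreal ((c + (\<Sum>k\<in>K. w k * x k))^2) \<partial>PiM K (\<lambda>_. Nd))
           = ennreal (c^2 + (\<Sum>k\<in>K. (w k)^2)/2)"
  using assms
proof (induction K arbitrary: c rule: finite_induct)
  case empty
  then show ?case by (simp add: nn_integral_const)
next
  case (insert i K)
  interpret product_sigma_finite "\<lambda>_. Nd" by (rule psf)
  have "(\<integral>\<^sup>+x. ennreal ((c + (\<Sum>k\<in>insert i K. w k * x k))^2) \<partial>PiM (insert i K) (\<lambda>_. Nd))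
     = (\<integral>\<^sup>+x. (\<integral>\<^sup>+y. ennreal ((c + (\<Sum>k\<in>insert i K. w k * (x(i:=y)) k))^2) \<partial>Nd) \<partial>PiM K (\<lambda>_. Nd))"
    by (rule product_nn_integral_insert) (use insert in auto)
  also have "\<dots> = (\<integral>\<^sup>+x. (\<integral>\<^sup>+y. ennreal (((c + (\<Sum>k\<in>K. w k * x k)) + w i * y)^2) \<partial>Nd) \<partial>PiM K (\<lambda>_. Nd))"
  proof (intro nn_integral_cong)
    fix x y
    have "(\<Sum>k\<in>K. w k * (x(i:=y)) k) = (\<Sum>k\<in>K. w k * x k)"
      using insert by (intro sum.cong) auto
    then show "ennreal ((c + (\<Sum>k\<in>insert i K. w k * (x(i:=y)) k))^2) = ennreal (((c + (\<Sum>k\<in>K. w k * x k)) + w i * y)^2)"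
      using insert by (simp add: algebra_simps)
  qed
  also have "\<dots> = (\<integral>\<^sup>+x. ennreal ((c + (\<Sum>k\<in>K. w k * x k))^2) + ennreal ((w i)^2/2) \<partial>PiM K (\<lambda>_. Nd))"
    by (simp add: normal_sq ennreal_plus[symmetric] del: ennreal_plus)
  also have "\<dots> = ennreal (c^2 + (\<Sum>k\<in>K. (w k)^2)/2) + ennreal ((w i)^2/2)"
    by (subst nn_integral_add) (auto simp: insert.IH nn_integral_const)
  also have "\<dots> = ennreal (c^2 + (\<Sum>k\<in>insert i K. (w k)^2)/2)"
  proof -
    have e: "c^2 + (\<Sum>k\<in>insert i K. (w k)^2)/2 = (c^2 + (\<Sum>k\<in>K. (w k)^2)/2) + (w i)^2/2"
      using insert by (simp add: field_simps)
    have "0 \<le> c^2 + (\<Sum>k\<in>K. (w k)^2)/2" by (intro add_nonneg_nonneg divide_nonneg_pos sum_nonneg) auto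
    then show ?thesis unfolding e by (intro ennreal_plus[symmetric]) auto
  qed
  finally show ?case .
qed

lemma inv_as_laplace:
  fixes a :: real
  assumes "a \<ge> 0"
  shows "ennreal (1/a) \<le> (\<integral>\<^sup>+t. ennreal (exp (-t*a)) * indicator {0..} t \<partial>lborel)"
proof (cases "a = 0")
  case True then show ?thesis by simp
next
  case False
  then have s: "a > 0" using assms by simp
  have "(\<integral>\<^sup>+t. ennreal (exp (-t*a)) * indicator {0..} t \<partial>lborel) = 0 - (- exp (-0*a)/a)"
  proof (rule nn_integral_FTC_atLeast)
    show "(\<lambda>t. exp (-t*a)) \<in> borel_measurable borel" by measurable
    show "DERIV (\<lambda>t. - exp (-t*a)/a) x :> exp (-x*a)" for x
      using s by (auto intro!: derivative_eq_intros simp: field_simps)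
    show "0 \<le> exp (-x*a)" for x by simp
    show "((\<lambda>t. - exp (-t*a)/a) \<longlongrightarrow> 0) at_top"
    proof -
      have "filterlim (\<lambda>t. a * t) at_top at_top"
        by (rule filterlim_tendsto_pos_mult_at_top[OF tendsto_const s filterlim_ident])
      then have "filterlim (\<lambda>t. -(a * t)) at_bot at_top"
        by (simp add: filterlim_uminus_at_top)
      then have "((\<lambda>t. exp (-(a * t))) \<longlongrightarrow> 0) at_top"
        by (rule filterlim_compose[OF exp_at_bot])
      then have "((\<lambda>t. - exp (-(a * t))/a) \<longlongrightarrow> -0/a) at_top"
        using s by (intro tendsto_intros) auto
      then show ?thesis by (simp add: mult.commute)
    qed
  qed
  then show ?thesis by simp
qed

lemma alg_aux: "y > (0::real) \<Longrightarrow> (real (Suc k) * (real (Suc k) * y^k)) * inverse ((real (Suc k) * y^(Suc k))^Suc(Suc 0)) = 1/y^(Suc(Suc k))"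
proof -
  assume y: "y > 0"
  define p where "p = y^k"
  have p: "p > 0" using y by (simp add: p_def)
  define r where "r = real (Suc k)"
  have r: "r > 0" by (simp add: r_def)
  have "(r * (r * p)) * inverse ((r * (y*p))^2) = 1/(y*(y*p))"
    using p r y by (simp add: field_simps power2_eq_square)
  then show ?thesis by (simp add: p_def r_def power2_eq_square)
qed

lemma deriv_aux: "m \<ge> 1 \<Longrightarrow> x \<ge> 0 \<Longrightarrow> DERIV (\<lambda>t. - 1/((real m)*(1+t)^m)) x :> 1/(1+x)^(Suc m)"
proof -
  assume m: "m \<ge> 1" and x: "x \<ge> (0::real)"
  have "DERIV (\<lambda>t. (1+t)^m) x :> real m * (1+x)^(m-1)"
    by (auto intro!: derivative_eq_intros)
  then have "DERIV (\<lambda>t. real m * (1+t)^m) x :> real m * (real m * (1+x)^(m-1))"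
    by (rule DERIV_cmult)
  then have "DERIV (\<lambda>t. inverse (real m * (1+t)^m)) x :> - (real m * (real m * (1+x)^(m-1)) * inverse ((real m * (1+x)^m)^Suc (Suc 0)))"
    using m x by (intro DERIV_inverse_fun) (auto simp: add_nonneg_pos)
  then have d: "DERIV (\<lambda>t. - inverse (real m * (1+t)^m)) x :> - (- (real m * (real m * (1+x)^(m-1)) * inverse ((real m * (1+x)^m)^Suc (Suc 0))))"
    by (rule DERIV_minus)
  obtain k where k: "m = Suc k" using m by (cases m) auto
  have e: "- (- (real m * (real m * (1+x)^(m-1)) * inverse ((real m * (1+x)^m)^Suc (Suc 0)))) = 1/(1+x)^(Suc m)"
    using x unfolding k by (simp only: minus_minus diff_Suc_1) (rule alg_aux, simp)
  have eq: "(\<lambda>t. - 1/((real m)*(1+t)^m)) = (\<lambda>t. - inverse (real m * (1+t)^m))"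
    by (simp add: divide_inverse)
  show ?thesis unfolding eq using d unfolding e .
qed

lemma lim_aux: "((\<lambda>t::real. - 1/((real m)*(1+t)^m)) \<longlongrightarrow> 0) at_top"
proof (cases "m = 0")
  case True then show ?thesis by simp
next
  case False
  have "filterlim (\<lambda>t::real. 1 + t) at_top at_top"
    by (rule filterlim_tendsto_add_at_top[OF tendsto_const filterlim_ident])
  then have "filterlim (\<lambda>t::real. (1 + t)^m) at_top at_top"
    using False by (intro filterlim_pow_at_top) auto
  then have "filterlim (\<lambda>t::real. real m * (1 + t)^m) at_top at_top"
    using False by (intro filterlim_tendsto_pos_mult_at_top[OF tendsto_const]) auto
  then have "((\<lambda>t. inverse (real m * (1 + t)^m)) \<longlongrightarrow> 0) at_top"
    by (rule tendsto_inverse_0_at_top)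
  then have "((\<lambda>t. - inverse (real m * (1 + t)^m)) \<longlongrightarrow> -0) at_top"
    by (intro tendsto_intros)
  then show ?thesis by (simp add: divide_inverse)
qed

lemma power_integral:
  fixes m :: nat
  assumes "m \<ge> 1"
  shows "(\<integral>\<^sup>+t. ennreal (1/(1+t)^(Suc m)) * indicator {0..} t \<partial>lborel) = ennreal (1/real m)"
proof -
  have "(\<integral>\<^sup>+t. ennreal (1/(1+t)^(Suc m)) * indicator {0..} t \<partial>lborel) = 0 - (- 1/((real m)*(1+0)^m))"
  proof (rule nn_integral_FTC_atLeast)
    show "(\<lambda>t::real. 1/(1+t)^(Suc m)) \<in> borel_measurable borel" by measurable
    show "DERIV (\<lambda>t. - 1/((real m)*(1+t)^m)) x :> 1/(1+x)^(Suc m)" if "0 \<le> x" for x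
      using deriv_aux assms that by blast
    show "0 \<le> 1/(1+x)^(Suc m)" if "0 \<le> x" for x :: real using that by simp
    show "((\<lambda>t. - 1/((real m)*(1+t)^m)) \<longlongrightarrow> 0) at_top" by (rule lim_aux)
  qed
  then show ?thesis by simp
qed


lemma gauss_prod:
  assumes K: "finite K" and t: "t \<ge> 0"
  shows "(\<integral>\<^sup>+x. ennreal (exp (-t * (\<Sum>k\<in>K. (x k)^2))) \<partial>PiM K (\<lambda>_. Nd))
         = ennreal ((1/sqrt(1+t))^(card K))"
proof -
  interpret product_sigma_finite "\<lambda>_. Nd" by (rule psf)
  have "(\<integral>\<^sup>+x. ennreal (exp (-t * (\<Sum>k\<in>K. (x k)^2))) \<partial>PiM K (\<lambda>_. Nd))
      = (\<integral>\<^sup>+x. (\<Prod>k\<in>K. (\<lambda>z. ennreal (exp (-t*z^2))) (x k)) \<partial>PiM K (\<lambda>_. Nd))"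
  proof (intro nn_integral_cong)
    fix x :: "'a \<Rightarrow> real"
    have "exp (-t * (\<Sum>k\<in>K. (x k)^2)) = (\<Prod>k\<in>K. exp (-t*(x k)^2))"
      using K by (simp add: sum_distrib_left exp_sum)
    then show "ennreal (exp (-t * (\<Sum>k\<in>K. (x k)^2))) = (\<Prod>k\<in>K. (\<lambda>z. ennreal (exp (-t*z^2))) (x k))"
      by (simp add: prod_ennreal)
  qed
  also have "\<dots> = (\<Prod>k\<in>K. \<integral>\<^sup>+z. ennreal (exp (-t*z^2)) \<partial>Nd)"
    using K by (intro product_nn_integral_prod) auto
  also have "\<dots> = (\<Prod>k\<in>K. ennreal (1/sqrt(1+t)))"
    using laplace_Nd[OF t] by simp
  also have "\<dots> = ennreal ((1/sqrt(1+t))^(card K))"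
    using t by (simp add: ennreal_power)
  finally show ?thesis .
qed

lemma inv_bound:
  fixes K :: "'a set"
  assumes K: "finite K" and cK: "card K = 2 * Suc m" and m: "m \<ge> 1"
  shows "(\<integral>\<^sup>+x. ennreal (1 / (\<Sum>k\<in>K. (x k)^2)) \<partial>PiM K (\<lambda>_. Nd)) \<le> ennreal (1 / real m)"
proof -
  interpret P: pair_sigma_finite lborel "PiM K (\<lambda>_. Nd)"
    unfolding pair_sigma_finite_def
    using prob_space_imp_sigma_finite[OF prob_PiM_Nd] by (auto intro: sigma_finite_lborel)
  have "(\<integral>\<^sup>+x. ennreal (1 / (\<Sum>k\<in>K. (x k)^2)) \<partial>PiM K (\<lambda>_. Nd))
     \<le> (\<integral>\<^sup>+x. (\<integral>\<^sup>+t. ennreal (exp (-t * (\<Sum>k\<in>K. (x k)^2))) * indicator {0..} t \<partial>lborel) \<partial>PiM K (\<lambda>_. Nd))"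
    by (intro nn_integral_mono inv_as_laplace sum_nonneg) auto
  also have "\<dots> = (\<integral>\<^sup>+t. (\<integral>\<^sup>+x. ennreal (exp (-t * (\<Sum>k\<in>K. (x k)^2))) * indicator {0..} t \<partial>PiM K (\<lambda>_. Nd)) \<partial>lborel)"
    by (rule P.Fubini'[where f="\<lambda>t x. ennreal (exp (-t * (\<Sum>k\<in>K. (x k)^2))) * indicator {0..} t"]) measurable
  also have "\<dots> = (\<integral>\<^sup>+t. ennreal (1/(1+t)^(Suc m)) * indicator {0..} t \<partial>lborel)"
  proof (intro nn_integral_cong)
    fix t :: real
    show "(\<integral>\<^sup>+x. ennreal (exp (-t * (\<Sum>k\<in>K. (x k)^2))) * indicator {0..} t \<partial>PiM K (\<lambda>_. Nd))
        = ennreal (1/(1+t)^(Suc m)) * indicator {0..} t"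
    proof (cases "t \<ge> 0")
      case True
      have e: "(1/sqrt(1+t))^(card K) = 1/(1+t)^(Suc m)"
        using True unfolding cK by (simp add: power_mult power_divide)
      then show ?thesis
        using True gauss_prod[OF K True] unfolding e by (simp add: nn_integral_multc)
    next
      case False then show ?thesis by simp
    qed
  qed
  also have "\<dots> = ennreal (1 / real m)" by (rule power_integral[OF m])
  finally show ?thesis .
qed



definition Sq :: "nat \<Rightarrow> nat \<Rightarrow> (nat\<times>nat\<times>bool \<Rightarrow> real) \<Rightarrow> real" where
  "Sq B i \<omega> = (\<Sum>b<B. (\<omega> (b,i,False))^2 + (\<omega> (b,i,True))^2)"
definition Rp :: "nat \<Rightarrow> nat \<Rightarrow> nat \<Rightarrow> (nat\<times>nat\<times>bool \<Rightarrow> real) \<Rightarrow> real" where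
  "Rp B i j \<omega> = (\<Sum>b<B. \<omega> (b,i,False) * \<omega> (b,j,False) + \<omega> (b,i,True) * \<omega> (b,j,True))"
definition Ip :: "nat \<Rightarrow> nat \<Rightarrow> nat \<Rightarrow> (nat\<times>nat\<times>bool \<Rightarrow> real) \<Rightarrow> real" where
  "Ip B i j \<omega> = (\<Sum>b<B. \<omega> (b,i,False) * \<omega> (b,j,True) - \<omega> (b,i,True) * \<omega> (b,j,False))"
definition Qf :: "nat \<Rightarrow> nat \<Rightarrow> nat \<Rightarrow> (nat\<times>nat\<times>bool \<Rightarrow> real) \<Rightarrow> real" where
  "Qf B i j \<omega> = ((Rp B i j \<omega>)^2 + (Ip B i j \<omega>)^2) / (Sq B i \<omega>)^2"

lemma meas_Qf:
  assumes "i < U" "j < U" "{..<B} \<times> {..<U} \<times> UNIV \<subseteq> J"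
  shows "(\<lambda>\<omega>. ennreal (Qf B i j \<omega>)) \<in> borel_measurable (PiM J (\<lambda>_. Nd))"
proof -
  have c: "(\<lambda>\<omega>. \<omega> (b,u,f)) \<in> borel_measurable (PiM J (\<lambda>_. Nd))" if "b < B" "u < U" for b u f
  proof -
    have "(\<lambda>\<omega>. \<omega> (b,u,f)) \<in> measurable (PiM J (\<lambda>_. Nd)) Nd"
      using that assms(3) by (intro measurable_component_singleton) auto
    then show ?thesis by (subst (asm) measurable_cong_sets[OF refl sets_Nd])
  qed
  show ?thesis
    unfolding Qf_def Sq_def Rp_def Ip_def
    using assms c by (intro measurable_compose[OF _ measurable_ennreal] borel_measurable_divide borel_measurable_add borel_measurable_power borel_measurable_sum borel_measurable_times borel_measurable_diff) auto
qed


lemma sum_col: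
  "(\<Sum>k\<in>{..<B}\<times>{j}\<times>(UNIV::bool set). h k) = (\<Sum>b<B. h (b,j,False) + h (b,j,True))"
proof -
  have "(\<Sum>k\<in>{..<B}\<times>({j}\<times>(UNIV::bool set)). h k) = (\<Sum>k\<in>{..<B}\<times>({j}\<times>(UNIV::bool set)). case_prod (\<lambda>b p. h (b,p)) k)"
    by simp
  also have "\<dots> = (\<Sum>b<B. \<Sum>p\<in>{j}\<times>(UNIV::bool set). h (b,p))"
    by (rule sum.cartesian_product[symmetric])
  also have "\<dots> = (\<Sum>b<B. h (b,j,False) + h (b,j,True))"
    by (intro sum.cong) (auto simp: UNIV_bool add.commute)
  finally show ?thesis by simp
qed

lemma meas_lin:
  assumes "finite L"
  shows "(\<lambda>y. ennreal ((c + (\<Sum>k\<in>L. w k * y k))^2)) \<in> borel_measurable (PiM L (\<lambda>_. Nd))"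
proof -
  have comp: "(\<lambda>y. y k) \<in> borel_measurable (PiM L (\<lambda>_. Nd))" if "k \<in> L" for k
  proof -
    have "(\<lambda>y. y k) \<in> measurable (PiM L (\<lambda>_. Nd)) Nd"
      using that by (intro measurable_component_singleton) auto
    then show ?thesis by (subst (asm) measurable_cong_sets[OF refl sets_Nd])
  qed
  show ?thesis
    using comp by (intro measurable_compose[OF _ measurable_ennreal] borel_measurable_add borel_measurable_power borel_measurable_sum borel_measurable_times) auto
qed


lemma pair_bound:
  assumes ij: "i < U" "j < U" "i \<noteq> j" and B: "B \<ge> 2"
  shows "(\<integral>\<^sup>+\<omega>. ennreal (Qf B i j \<omega>) \<partial>PiM ({..<B}\<times>{..<U}\<times>UNIV) (\<lambda>_. Nd)) \<le> ennreal (1/(real B - 1))"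
proof -
  interpret product_sigma_finite "\<lambda>_. Nd" by (rule psf)
  define K where "K = {..<B}\<times>{i}\<times>(UNIV::bool set)"
  define Cj where "Cj = {..<B}\<times>{j}\<times>(UNIV::bool set)"
  define L where "L = {..<B}\<times>{..<U}\<times>(UNIV::bool set) - K"
  have IKL: "{..<B}\<times>{..<U}\<times>(UNIV::bool set) = K \<union> L"
    using ij unfolding K_def L_def by auto
  have finK: "finite K" and finL: "finite L" unfolding K_def L_def by auto
  have KL: "K \<inter> L = {}" unfolding L_def by auto
  have CjL: "Cj \<subseteq> L" using ij unfolding Cj_def L_def K_def by auto
  have "(\<integral>\<^sup>+\<omega>. ennreal (Qf B i j \<omega>) \<partial>PiM ({..<B}\<times>{..<U}\<times>UNIV) (\<lambda>_. Nd))
      = (\<integral>\<^sup>+x. (\<integral>\<^sup>+y. ennreal (Qf B i j (merge K L (x,y))) \<partial>PiM L (\<lambda>_. Nd)) \<partial>PiM K (\<lambda>_. Nd))"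
    unfolding IKL
    by (rule product_nn_integral_fold[OF KL finK finL]) (rule meas_Qf[OF ij(1,2)], simp add: IKL[symmetric])
  also have "\<dots> \<le> (\<integral>\<^sup>+x. ennreal (1 / (\<Sum>k\<in>K. (x k)^2)) \<partial>PiM K (\<lambda>_. Nd))"
  proof (intro nn_integral_mono)
    fix x :: "nat\<times>nat\<times>bool \<Rightarrow> real"
    define S where "S = Sq B i x"
    define w1 where "w1 = (\<lambda>k::nat\<times>nat\<times>bool. if k \<in> Cj then (if snd (snd k) then x (fst k,i,True) else x (fst k,i,False)) else 0)"
    define w2 where "w2 = (\<lambda>k::nat\<times>nat\<times>bool. if k \<in> Cj then (if snd (snd k) then x (fst k,i,False) else - x (fst k,i,True)) else 0)"
    have mK: "merge K L (x,y) (b,i,f) = x (b,i,f)" if "b < B" for y b f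
      using that by (simp add: merge_def K_def)
    have mL: "merge K L (x,y) (b,j,f) = y (b,j,f)" if "b < B" for y b f
      using that ij by (simp add: merge_def K_def L_def)
    have sumL: "(\<Sum>k\<in>L. w k * y k) = (\<Sum>k\<in>Cj. w k * y k)" if "\<And>k. k \<notin> Cj \<Longrightarrow> w k = 0" for w :: "_ \<Rightarrow> real" and y :: "_ \<Rightarrow> real"
      using finL CjL that by (intro sum.mono_neutral_right) auto
    have sumL2: "(\<Sum>k\<in>L. (w k)^2) = (\<Sum>k\<in>Cj. (w k)^2)" if "\<And>k. k \<notin> Cj \<Longrightarrow> w k = 0" for w :: "_ \<Rightarrow> real"
      using finL CjL that by (intro sum.mono_neutral_right) auto
    have R: "Rp B i j (merge K L (x,y)) = 0 + (\<Sum>k\<in>L. w1 k * y k)" for y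
      using mK mL by (subst sumL) (auto simp: w1_def Rp_def sum_col Cj_def intro!: sum.cong)
    have I: "Ip B i j (merge K L (x,y)) = 0 + (\<Sum>k\<in>L. w2 k * y k)" for y
      using mK mL by (subst sumL) (auto simp: w2_def Ip_def sum_col Cj_def intro!: sum.cong)
    have Sm: "Sq B i (merge K L (x,y)) = S" for y
      using mK by (auto simp: S_def Sq_def intro!: sum.cong)
    have W1: "(\<Sum>k\<in>L. (w1 k)^2) = S"
      by (subst sumL2) (auto simp: w1_def S_def Sq_def sum_col Cj_def add.commute intro!: sum.cong)
    have W2: "(\<Sum>k\<in>L. (w2 k)^2) = S"
      by (subst sumL2) (auto simp: w2_def S_def Sq_def sum_col Cj_def add.commute intro!: sum.cong)
    have S0: "S \<ge> 0" unfolding S_def Sq_def by (intro sum_nonneg) auto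
    have split: "ennreal (Qf B i j (merge K L (x,y))) =
        ennreal ((0 + (\<Sum>k\<in>L. w1 k * y k))^2) * ennreal (1/S^2) + ennreal ((0 + (\<Sum>k\<in>L. w2 k * y k))^2) * ennreal (1/S^2)" for y
    proof -
      have "Qf B i j (merge K L (x,y)) = (0 + (\<Sum>k\<in>L. w1 k * y k))^2 * (1/S^2) + (0 + (\<Sum>k\<in>L. w2 k * y k))^2 * (1/S^2)"
        unfolding Qf_def R I Sm by (simp add: add_divide_distrib)
      then show ?thesis by (simp add: ennreal_mult[symmetric] ennreal_plus[symmetric] del: ennreal_plus)
    qed
    have "(\<integral>\<^sup>+y. ennreal (Qf B i j (merge K L (x,y))) \<partial>PiM L (\<lambda>_. Nd))
      = (\<integral>\<^sup>+y. ennreal ((0 + (\<Sum>k\<in>L. w1 k * y k))^2) \<partial>PiM L (\<lambda>_. Nd)) * ennreal (1/S^2)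
        + (\<integral>\<^sup>+y. ennreal ((0 + (\<Sum>k\<in>L. w2 k * y k))^2) \<partial>PiM L (\<lambda>_. Nd)) * ennreal (1/S^2)"
      unfolding split
      by (subst nn_integral_add) (auto intro!: measurable_compose[OF meas_lin[OF finL]] borel_measurable_times_ennreal simp: nn_integral_multc meas_lin[OF finL])
    also have "\<dots> = ennreal (S/2) * ennreal (1/S^2) + ennreal (S/2) * ennreal (1/S^2)"
      using sum_sq[OF finL, of 0 w1] sum_sq[OF finL, of 0 w2] W1 W2 by simp
    also have "\<dots> = ennreal (1 / S)"
    proof -
      have "S/2 * (1/S^2) + S/2 * (1/S^2) = 1/S" by (simp add: power2_eq_square field_simps)
      then show ?thesis using S0 by (simp add: ennreal_mult[symmetric] ennreal_plus[symmetric] del: ennreal_plus)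
    qed
    also have "S = (\<Sum>k\<in>K. (x k)^2)"
      unfolding S_def Sq_def K_def sum_col ..
    finally show "(\<integral>\<^sup>+y. ennreal (Qf B i j (merge K L (x,y))) \<partial>PiM L (\<lambda>_. Nd)) \<le> ennreal (1 / (\<Sum>k\<in>K. (x k)^2))"
      by simp
  qed
  also have "\<dots> \<le> ennreal (1 / real (B - 1))"
  proof (rule inv_bound[OF finK])
    show "card K = 2 * Suc (B - 1)" using B unfolding K_def by (simp add: card_cartesian_product)
    show "B - 1 \<ge> 1" using B by simp
  qed
  also have "real (B - 1) = real B - 1" using B by simp
  finally show ?thesis .
qed

lemma fin_sq: "(x::real) \<ge> 5 \<Longrightarrow> (1/(x-1))^2 \<le> 2*x*(x+1)/((x-1)*(x-2)*(x-3)*(x-4))"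
proof -
  assume x: "x \<ge> 5"
  have a: "(x-2)*(x-3)*(x-4) \<le> 2*x*(x+1)*(x-1)"
  proof -
    have "(x-2)*(x-3) \<le> x*(x+1)" using x by (intro mult_mono) auto
    moreover have "x - 4 \<le> 2*(x-1)" using x by simp
    ultimately have "((x-2)*(x-3))*(x-4) \<le> (x*(x+1))*(2*(x-1))"
      using x by (intro mult_mono) auto
    then show ?thesis by (simp add: algebra_simps)
  qed
  have nz: "x-1 \<noteq> 0" "x-2 \<noteq> 0" "x-3 \<noteq> 0" "x-4 \<noteq> 0" using x by auto
  have p: "(x-1)*(x-2)*(x-3)*(x-4) > 0" using x by simp
  have "(1/(x-1))^2 = ((x-2)*(x-3)*(x-4)) / ((x-1)*(x-2)*(x-3)*(x-4)*(x-1))"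
    using nz by (simp add: power2_eq_square divide_simps)
  also have "\<dots> \<le> (2*x*(x+1)*(x-1)) / ((x-1)*(x-2)*(x-3)*(x-4)*(x-1))"
    using a p x by (intro divide_right_mono) auto
  also have "\<dots> = 2*x*(x+1)/((x-1)*(x-2)*(x-3)*(x-4))"
    using nz by (simp add: divide_simps)
  finally show ?thesis .
qed

lemma entry_bound:
  assumes ij: "i < U" "j < U" and c: "N0 / Es \<ge> 0"
  shows "(cmod (mat_mul U (diag_inv (diag_part (Amat B N0 Es (chan \<omega>)))) (offdiag_part (Amat B N0 Es (chan \<omega>))) i j))^2
         \<le> (if i = j then 0 else Qf B i j \<omega>)"
proof -
  let ?A = "Amat B N0 Es (chan \<omega>)"
  have mm: "mat_mul U (diag_inv (diag_part ?A)) (offdiag_part ?A) i j = inverse (?A i i) * offdiag_part ?A i j"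
    unfolding mat_mul_def diag_inv_def diag_part_def using ij
    by (simp add: if_distrib[of "\<lambda>z. z * _"] cong: if_cong)
  show ?thesis
  proof (cases "i = j")
    case True then show ?thesis unfolding mm by (simp add: offdiag_part_def diag_part_def)
  next
    case False
    have Aij: "?A i j = Complex (Rp B i j \<omega>) (Ip B i j \<omega>)"
      using False by (simp add: Amat_def chan_def Rp_def Ip_def complex_eq_iff Re_sum Im_sum)
    define cc where "cc = N0/Es"
    have Aii: "?A i i = complex_of_real (Sq B i \<omega> + cc)"
      by (simp add: cc_def Amat_def chan_def Sq_def complex_eq_iff Re_sum Im_sum power2_eq_square)
    have S0: "Sq B i \<omega> \<ge> 0" unfolding Sq_def by (intro sum_nonneg) auto
    have "(cmod (inverse (?A i i) * ?A i j))^2 = ((Rp B i j \<omega>)^2 + (Ip B i j \<omega>)^2) / (Sq B i \<omega> + cc)^2"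
      unfolding Aij Aii by (simp add: norm_mult cmod_power2 power_mult_distrib norm_inverse divide_inverse power_inverse)
    also have "\<dots> \<le> Qf B i j \<omega>"
    proof (cases "Sq B i \<omega> = 0")
      case True
      have "\<forall>b\<in>{..<B}. (\<omega> (b,i,False))^2 + (\<omega> (b,i,True))^2 = 0"
        using True unfolding Sq_def by (subst (asm) sum_nonneg_eq_0_iff) auto
      then have z: "\<omega> (b,i,False) = 0" "\<omega> (b,i,True) = 0" if "b < B" for b
        using that by (auto simp: add_nonneg_eq_0_iff)
      have "Rp B i j \<omega> = 0" "Ip B i j \<omega> = 0" unfolding Rp_def Ip_def using z by (auto intro!: sum.neutral)
      then show ?thesis by (simp add: Qf_def)
    next
      case False
      then have "Sq B i \<omega> > 0" using S0 by simp
      then show ?thesis unfolding Qf_def using c cc_def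
        by (intro divide_left_mono power_mono mult_pos_pos) auto
    qed
    finally show ?thesis using False mm by (simp add: offdiag_part_def diag_part_def)
  qed
qed


lemma Qf_nonneg: "Qf B i j \<omega> \<ge> 0"
  unfolding Qf_def by simp

lemma count_sum:
  fixes r :: real
  shows "(\<Sum>i<U. \<Sum>j<U. (if i = j then 0 else r)) = (real U ^ 2 - real U) * r"
proof -
  have "(\<Sum>j<U. (if i = j then 0 else r)) = (real U - 1) * r" if "i < U" for i
  proof -
    have "(\<Sum>j<U. (if i = j then 0 else r)) = (\<Sum>j<U. r - (if i = j then r else 0))"
      by (intro sum.cong) auto
    also have "\<dots> = real U * r - r" using that by (simp add: sum_subtractf)
    finally show ?thesis by (simp add: algebra_simps)
  qed
  then have "(\<Sum>i<U. \<Sum>j<U. (if i = j then 0 else r)) = (\<Sum>i<U. (real U - 1) * r)"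
    by (intro sum.cong) auto
  also have "\<dots> = (real U ^ 2 - real U) * r" by (simp add: power2_eq_square algebra_simps)
  finally show ?thesis .
qed

theorem lemma3:
  fixes B U :: nat and N0 Es :: real
  assumes "B > 4" and "U \<ge> 1" and "N0 \<ge> 0" and "Es > 0"
  shows "(\<integral>\<^sup>+ \<omega>. ennreal (frob_sq U U
            (let A = Amat B N0 Es (chan \<omega>) in mat_mul U (diag_inv (diag_part A)) (offdiag_part A)))
          \<partial>gauss_space B U)
         \<le> ennreal ((real U ^ 2 - real U) *
              sqrt (2 * real B * (real B + 1) /
                    ((real B - 1) * (real B - 2) * (real B - 3) * (real B - 4))))"
proof -
  let ?M = "PiM ({..<B}\<times>{..<U}\<times>(UNIV::bool set)) (\<lambda>_. Nd)"
  define G where "G = (\<lambda>i j \<omega>. ennreal (if i = j then 0 else Qf B i j \<omega>))"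
  have gs: "gauss_space B U = ?M" by (simp add: gauss_space_def Nd_def)
  have c: "N0 / Es \<ge> 0" using assms by simp
  have "(\<integral>\<^sup>+ \<omega>. ennreal (frob_sq U U
            (let A = Amat B N0 Es (chan \<omega>) in mat_mul U (diag_inv (diag_part A)) (offdiag_part A))) \<partial>?M)
      \<le> (\<integral>\<^sup>+ \<omega>. (\<Sum>i<U. \<Sum>j<U. G i j \<omega>) \<partial>?M)"
  proof (intro nn_integral_mono)
    fix \<omega>
    have "frob_sq U U (let A = Amat B N0 Es (chan \<omega>) in mat_mul U (diag_inv (diag_part A)) (offdiag_part A))
        \<le> (\<Sum>i<U. \<Sum>j<U. (if i = j then 0 else Qf B i j \<omega>))"
      unfolding frob_sq_def Let_def by (intro sum_mono entry_bound c) auto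
    moreover have "(\<Sum>i<U. \<Sum>j<U. G i j \<omega>) = ennreal (\<Sum>i<U. \<Sum>j<U. (if i = j then 0 else Qf B i j \<omega>))"
      unfolding G_def by (simp add: Qf_nonneg sum_nonneg)
    ultimately show "ennreal (frob_sq U U
            (let A = Amat B N0 Es (chan \<omega>) in mat_mul U (diag_inv (diag_part A)) (offdiag_part A)))
        \<le> (\<Sum>i<U. \<Sum>j<U. G i j \<omega>)"
      by (simp add: ennreal_leI)
  qed
  also have "\<dots> = (\<Sum>i<U. \<Sum>j<U. \<integral>\<^sup>+ \<omega>. G i j \<omega> \<partial>?M)"
  proof -
    have mG: "G i j \<in> borel_measurable ?M" if "i < U" "j < U" for i j
    proof (cases "i = j")
      case True then show ?thesis by (simp add: G_def)
    next
      case False then show ?thesis using meas_Qf[OF that, of B "{..<B}\<times>{..<U}\<times>UNIV"]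
        by (simp add: G_def)
    qed
    have "(\<integral>\<^sup>+ \<omega>. (\<Sum>i<U. \<Sum>j<U. G i j \<omega>) \<partial>?M) = (\<Sum>i<U. \<integral>\<^sup>+ \<omega>. (\<Sum>j<U. G i j \<omega>) \<partial>?M)"
      by (rule nn_integral_sum) (use mG in \<open>auto intro!: borel_measurable_sum\<close>)
    also have "\<dots> = (\<Sum>i<U. \<Sum>j<U. \<integral>\<^sup>+ \<omega>. G i j \<omega> \<partial>?M)"
      by (intro sum.cong refl nn_integral_sum) (use mG in auto)
    finally show ?thesis .
  qed
  also have "\<dots> \<le> (\<Sum>i<U. \<Sum>j<U. ennreal (if i = j then 0 else 1/(real B - 1)))"
  proof (intro sum_mono)
    fix i j assume "i \<in> {..<U}" "j \<in> {..<U}"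
    then show "(\<integral>\<^sup>+ \<omega>. G i j \<omega> \<partial>?M) \<le> ennreal (if i = j then 0 else 1/(real B - 1))"
      using pair_bound[of i U j B] assms by (cases "i = j") (auto simp: G_def)
  qed
  also have "\<dots> = ennreal ((real U ^ 2 - real U) * (1/(real B - 1)))"
    using assms count_sum[where r="1/(real B - 1)" and U=U] by (simp add: sum_nonneg)
  also have "\<dots> \<le> ennreal ((real U ^ 2 - real U) *
              sqrt (2 * real B * (real B + 1) /
                    ((real B - 1) * (real B - 2) * (real B - 3) * (real B - 4))))"
  proof (intro ennreal_leI mult_left_mono real_le_rsqrt fin_sq)
    show "5 \<le> real B" using assms by simp
    have "real U \<le> real U ^ 2" using assms by (simp add: power2_eq_square)
    then show "0 \<le> real U ^ 2 - real U" by simp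
  qed
  finally show ?thesis unfolding gs .
qed


end
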